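(* Let $A$ be a finite nonempty set, $f\in\mathrm{Op}(A)$ and let $\rho$ be a generalized quasiorder on $A$. Then $f$ preserves $\rho$ if and only if every translation $g\in\mathrm{trl}(f)$ preserves $\rho$. Consequently, $\mathrm{Pol}\,\rho=(\mathrm{End}\,\rho)^{*}$.
   Context: $\mathrm{Op}(A)$ is the set of all operations $f:A^n\to A$, $n\ge1$. An $n$-ary $f$ preserves an $m$-ary relation $\rho$ if for all $r_1,\dots,r_n\in\rho$ the tuple obtained by applying $f$ componentwise, $(f(r_1(1),\dots,r_n(1)),\dots,f(r_1(m),\dots,r_n(m)))$, lies in $\rho$. $\mathrm{Pol}\,\rho$ is the set of all operations preserving $\rho$, $\mathrm{End}\,\rho$ the set of unary ones. For $n$-ary $f$, a translation is a unary map $x\mapsto f(a_1,\dots,a_{i-1},x,a_{i+1},\dots,a_n)$ with fixed $a_j\in A$; $\mathrm{trl}(f)$ is the set of all translations (for unary $f$, $\mathrm{trl}(f)=\{f\}$). For $M\subseteq A^A$, $M^*:=\{f\in\mathrm{Op}(A)\mid\mathrm{trl}(f)\subseteq M\}$. An $m$-ary relation $\rho$ is a generalized quasiorder if it is reflexive ($(a,\dots,a)\in\rho$ for all $a$) and transitive: for every $m\times m$-matrix $(a_{ij})$ over $A$ all of whose rows and columns belong to $\rho$, the diagonal $(a_{11},\dots,a_{mm})$ belongs to $\rho$. *)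

theory Defs
  imports Main
begin

(* The base set A is the (finite, automatically nonempty) universe of a type 'a::finite.
   An n-ary operation is a pair (n, f) with n >= 1 and f :: (nat => 'a) => 'a depending only
   on its first n arguments (argument tuples are functions from {0..<n}).
   An m-ary relation is a set of lists of length m. *)

definition Op :: "(nat \<times> ((nat \<Rightarrow> 'a) \<Rightarrow> 'a)) set" where
  "Op = {(n, f). n \<ge> 1 \<and> (\<forall>x y. (\<forall>i<n. x i = y i) \<longrightarrow> f x = f y)}"

definition preserves :: "nat \<Rightarrow> ((nat \<Rightarrow> 'a) \<Rightarrow> 'a) \<Rightarrow> nat \<Rightarrow> 'a list set \<Rightarrow> bool" where
  "preserves n f m \<rho> \<longleftrightarrow>
     (\<forall>r :: nat \<Rightarrow> 'a list. (\<forall>i<n. r i \<in> \<rho>) \<longrightarrow>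
        map (\<lambda>j. f (\<lambda>i. r i ! j)) [0..<m] \<in> \<rho>)"

definition Pol :: "nat \<Rightarrow> 'a list set \<Rightarrow> (nat \<times> ((nat \<Rightarrow> 'a) \<Rightarrow> 'a)) set" where
  "Pol m \<rho> = {(n, f) \<in> Op. preserves n f m \<rho>}"

definition End :: "nat \<Rightarrow> 'a list set \<Rightarrow> ('a \<Rightarrow> 'a) set" where
  "End m \<rho> = {g. preserves 1 (\<lambda>x. g (x 0)) m \<rho>}"

definition trl :: "nat \<Rightarrow> ((nat \<Rightarrow> 'a) \<Rightarrow> 'a) \<Rightarrow> ('a \<Rightarrow> 'a) set" where
  "trl n f = {(\<lambda>x. f (a(i := x))) | a i. i < n}"

definition star :: "('a \<Rightarrow> 'a) set \<Rightarrow> (nat \<times> ((nat \<Rightarrow> 'a) \<Rightarrow> 'a)) set" where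
  "star M = {(n, f) \<in> Op. trl n f \<subseteq> M}"

definition reflexive_rel :: "nat \<Rightarrow> 'a list set \<Rightarrow> bool" where
  "reflexive_rel m \<rho> \<longleftrightarrow> (\<forall>a. replicate m a \<in> \<rho>)"

definition transitive_rel :: "nat \<Rightarrow> 'a list set \<Rightarrow> bool" where
  "transitive_rel m \<rho> \<longleftrightarrow>
     (\<forall>M :: nat \<Rightarrow> nat \<Rightarrow> 'a.
        (\<forall>i<m. map (\<lambda>j. M i j) [0..<m] \<in> \<rho>) \<longrightarrow>
        (\<forall>j<m. map (\<lambda>i. M i j) [0..<m] \<in> \<rho>) \<longrightarrow>
        map (\<lambda>i. M i i) [0..<m] \<in> \<rho>)"

definition gen_quasiorder :: "nat \<Rightarrow> 'a list set \<Rightarrow> bool" where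
  "gen_quasiorder m \<rho> \<longleftrightarrow> reflexive_rel m \<rho> \<and> transitive_rel m \<rho>"

end

theory Submission
  imports Defs
begin

lemma fwd:
  assumes refl: "reflexive_rel m \<rho>" and pres: "preserves n f m \<rho>" and i: "i < n"
  shows "(\<lambda>x. f (a(i:=x))) \<in> End m \<rho>"
  unfolding End_def preserves_def
proof (intro CollectI allI impI)
  fix r :: "nat \<Rightarrow> 'a list"
  assume "\<forall>k<1. r k \<in> \<rho>"
  then have r0: "r 0 \<in> \<rho>" by simp
  define R where "R k = (if k = i then r 0 else replicate m (a k))" for k
  have "\<forall>k<n. R k \<in> \<rho>" using r0 refl unfolding R_def reflexive_rel_def by auto
  then have "map (\<lambda>j. f (\<lambda>k. R k ! j)) [0..<m] \<in> \<rho>" using pres unfolding preserves_def by blast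
  moreover have "map (\<lambda>j. f (\<lambda>k. R k ! j)) [0..<m] = map (\<lambda>j. f (a(i := r 0 ! j))) [0..<m]"
  proof (rule map_cong[OF HOL.refl])
    fix j assume "j \<in> set [0..<m]"
    then have "j < m" by simp
    then have "(\<lambda>k. R k ! j) = a(i := r 0 ! j)" by (auto simp: R_def)
    then show "f (\<lambda>k. R k ! j) = f (a(i := r 0 ! j))" by simp
  qed
  ultimately show "map (\<lambda>j. f (a(i := r 0 ! j))) [0..<m] \<in> \<rho>" by simp
qed

lemma bwd_aux:
  assumes len: "\<rho> \<subseteq> {xs. length xs = m}" and tr: "transitive_rel m \<rho>"
    and refl: "reflexive_rel m \<rho>"
    and hall: "\<forall>g\<in>trl n f. g \<in> End m \<rho>" and rin: "\<forall>i<n. r i \<in> \<rho>"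
  shows "k \<le> n \<Longrightarrow> \<forall>a. map (\<lambda>j. f (\<lambda>i. if i < k then r i ! j else a i)) [0..<m] \<in> \<rho>"
proof (induction k)
  case 0
  have "map (\<lambda>j. f (\<lambda>i. if i < 0 then r i ! j else a i)) [0..<m] = replicate m (f a)" for a
    by (simp add: map_replicate_const)
  then show ?case using refl unfolding reflexive_rel_def by simp
next
  case (Suc k)
  then have kn: "k < n" and IH: "\<forall>a. map (\<lambda>j. f (\<lambda>i. if i < k then r i ! j else a i)) [0..<m] \<in> \<rho>"
    by auto
  have rk: "r k \<in> \<rho>" using rin kn by simp
  then have lrk: "length (r k) = m" using len by auto
  show ?case
  proof
    fix a
    define M where "M p q = f (\<lambda>i. if i < k then r i ! q else (a(k := r k ! p)) i)" for p q
    have rows: "\<forall>p<m. map (\<lambda>q. M p q) [0..<m] \<in> \<rho>"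
      unfolding M_def using IH by blast
    have cols: "\<forall>q<m. map (\<lambda>p. M p q) [0..<m] \<in> \<rho>"
    proof (intro allI impI)
      fix q assume "q < m"
      define b where "b i = (if i < k then r i ! q else a i)" for i
      have "(\<lambda>x. f (b(k := x))) \<in> trl n f" unfolding trl_def using kn by blast
      then have "(\<lambda>x. f (b(k := x))) \<in> End m \<rho>" using hall by blast
      then have "map (\<lambda>j. f (b(k := (\<lambda>_. r k) 0 ! j))) [0..<m] \<in> \<rho>"
        unfolding End_def preserves_def using rk by auto
      moreover have "b(k := x) = (\<lambda>i. if i < k then r i ! q else (a(k := x)) i)" for x
        by (auto simp: b_def)
      ultimately show "map (\<lambda>p. M p q) [0..<m] \<in> \<rho>" unfolding M_def by simp
    qed
    have "map (\<lambda>i. M i i) [0..<m] \<in> \<rho>" using tr rows cols unfolding transitive_rel_def by blast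
    moreover have "(\<lambda>i. if i < k then r i ! q else (a(k := r k ! q)) i)
                 = (\<lambda>i. if i < Suc k then r i ! q else a i)" for q
      by (rule ext) (auto simp: less_Suc_eq)
    ultimately show "map (\<lambda>j. f (\<lambda>i. if i < Suc k then r i ! j else a i)) [0..<m] \<in> \<rho>"
      unfolding M_def by simp
  qed
qed

lemma bwd:
  assumes len: "\<rho> \<subseteq> {xs. length xs = m}" and tr: "transitive_rel m \<rho>"
    and refl: "reflexive_rel m \<rho>" and op: "(n, f) \<in> Op"
    and hall: "\<forall>g\<in>trl n f. g \<in> End m \<rho>"
  shows "preserves n f m \<rho>"
  unfolding preserves_def
proof (intro allI impI)
  fix r :: "nat \<Rightarrow> 'a list"
  assume rin: "\<forall>i<n. r i \<in> \<rho>"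
  have "map (\<lambda>j. f (\<lambda>i. if i < n then r i ! j else undefined)) [0..<m] \<in> \<rho>"
    using bwd_aux[OF len tr refl hall rin, of n] by simp
  moreover have "f (\<lambda>i. if i < n then r i ! j else undefined) = f (\<lambda>i. r i ! j)" for j
    using op unfolding Op_def by auto
  ultimately show "map (\<lambda>j. f (\<lambda>i. r i ! j)) [0..<m] \<in> \<rho>" by simp
qed

theorem theorem3p7:
  fixes \<rho> :: "('a::finite) list set" and m :: nat
  assumes "\<rho> \<subseteq> {xs. length xs = m}"
    and "gen_quasiorder m \<rho>"
  shows "(\<forall>n f. (n, f) \<in> (Op :: (nat \<times> ((nat \<Rightarrow> 'a) \<Rightarrow> 'a)) set) \<longrightarrow>
            (preserves n f m \<rho> \<longleftrightarrow> (\<forall>g \<in> trl n f. g \<in> End m \<rho>)))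
         \<and> Pol m \<rho> = star (End m \<rho>)"
proof -
  have rf: "reflexive_rel m \<rho>" and tr: "transitive_rel m \<rho>"
    using assms(2) unfolding gen_quasiorder_def by auto
  have main: "\<forall>n f. (n, f) \<in> (Op :: (nat \<times> ((nat \<Rightarrow> 'a) \<Rightarrow> 'a)) set) \<longrightarrow>
            (preserves n f m \<rho> \<longleftrightarrow> (\<forall>g \<in> trl n f. g \<in> End m \<rho>))"
  proof (intro allI impI iffI)
    fix n f assume "(n, f) \<in> (Op :: (nat \<times> ((nat \<Rightarrow> 'a) \<Rightarrow> 'a)) set)" "preserves n f m \<rho>"
    then show "\<forall>g \<in> trl n f. g \<in> End m \<rho>"
      unfolding trl_def using fwd[OF rf] by blast
  next
    fix n f assume "(n, f) \<in> (Op :: (nat \<times> ((nat \<Rightarrow> 'a) \<Rightarrow> 'a)) set)" "\<forall>g \<in> trl n f. g \<in> End m \<rho>"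
    then show "preserves n f m \<rho>" using bwd[OF assms(1) tr rf] by blast
  qed
  moreover have "Pol m \<rho> = star (End m \<rho>)"
    unfolding Pol_def star_def using main by blast
  ultimately show ?thesis by blast
qed

end
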